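(* Let $\mathcal M$ be a map in class $2_{\{0,1\}}$. Then no two distinct faces of $\mathcal M$ share two consecutive edges (i.e., there is no pair of distinct faces whose boundaries both contain a common path of two edges).
   Context: A map is a $2$-cell embedding of a connected simple graph (its underlying graph) in a closed surface; the components of the complement are the faces. All maps considered are polytopal: flags correspond bijectively to incident triples (vertex, edge, face). For a flag $\Phi$ and $i\in\{0,1,2\}$, $\Phi^i$ is the unique flag differing from $\Phi$ exactly in its vertex ($i=0$), edge ($i=1$) or face ($i=2$). $\mathrm{Aut}(\mathcal M)$ is the group of automorphisms of the underlying graph preserving the set of faces, acting on flags. A map is in class $2_{\{0,1\}}$ if $\mathrm{Aut}(\mathcal M)$ has exactly two orbits on flags and for every flag $\Phi$, the flags $\Phi^0,\Phi^1$ lie in the orbit of $\Phi$ while $\Phi^2$ does not. *)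

theory Defs
  imports Main
begin

text \<open>A polytopal map is encoded combinatorially: vertices V, edges E (2-element
subsets of V, so the underlying graph is simple), abstract faces F, and flags,
which are exactly the incident triples (vertex, edge, face).\<close>

type_synonym ('v, 'f) flag = "'v \<times> 'v set \<times> 'f"

definition fv :: "('v, 'f) flag \<Rightarrow> 'v" where "fv \<Phi> = fst \<Phi>"
definition fe :: "('v, 'f) flag \<Rightarrow> 'v set" where "fe \<Phi> = fst (snd \<Phi>)"
definition ff :: "('v, 'f) flag \<Rightarrow> 'f" where "ff \<Phi> = snd (snd \<Phi>)"

definition differs_exactly :: "nat \<Rightarrow> ('v, 'f) flag \<Rightarrow> ('v, 'f) flag \<Rightarrow> bool" where
  "differs_exactly i \<Phi> \<Psi> \<longleftrightarrow>
     (if i = 0 then fv \<Phi> \<noteq> fv \<Psi> \<and> fe \<Phi> = fe \<Psi> \<and> ff \<Phi> = ff \<Psi>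
      else if i = 1 then fv \<Phi> = fv \<Psi> \<and> fe \<Phi> \<noteq> fe \<Psi> \<and> ff \<Phi> = ff \<Psi>
      else fv \<Phi> = fv \<Psi> \<and> fe \<Phi> = fe \<Psi> \<and> ff \<Phi> \<noteq> ff \<Psi>)"

definition nbr :: "('v, 'f) flag set \<Rightarrow> nat \<Rightarrow> ('v, 'f) flag \<Rightarrow> ('v, 'f) flag" where
  "nbr Fl i \<Phi> = (THE \<Psi>. \<Psi> \<in> Fl \<and> differs_exactly i \<Phi> \<Psi>)"

definition steps :: "('v, 'f) flag set \<Rightarrow> nat set \<Rightarrow> (('v, 'f) flag \<times> ('v, 'f) flag) set" where
  "steps Fl I = {(\<Phi>, nbr Fl i \<Phi>) | \<Phi> i. \<Phi> \<in> Fl \<and> i \<in> I}"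

text \<open>Combinatorial characterisation of a polytopal map on a closed (connected) surface:
finitely many flags, each flag has a unique i-adjacent flag for i = 0,1,2, r0 and r2
commute, the flag graph is connected, and vertices / edges / faces are exactly the
orbits of the subgroups generated by {r1,r2}, {r0,r2}, {r0,r1} respectively.\<close>
definition polytopal_map :: "'v set \<Rightarrow> 'v set set \<Rightarrow> 'f set \<Rightarrow> ('v, 'f) flag set \<Rightarrow> bool" where
  "polytopal_map V E F Fl \<longleftrightarrow>
     finite Fl \<and> Fl \<noteq> {} \<and>
     Fl \<subseteq> V \<times> E \<times> F \<and>
     (\<forall>e\<in>E. e \<subseteq> V \<and> card e = 2) \<and>
     (\<forall>\<Phi>\<in>Fl. fv \<Phi> \<in> fe \<Phi>) \<and>
     fv ` Fl = V \<and> fe ` Fl = E \<and> ff ` Fl = F \<and>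
     (\<forall>\<Phi>\<in>Fl. \<forall>i\<in>{0,1,2}. \<exists>!\<Psi>. \<Psi> \<in> Fl \<and> differs_exactly i \<Phi> \<Psi>) \<and>
     (\<forall>\<Phi>\<in>Fl. nbr Fl 0 (nbr Fl 2 \<Phi>) = nbr Fl 2 (nbr Fl 0 \<Phi>)) \<and>
     (\<forall>\<Phi>\<in>Fl. \<forall>\<Psi>\<in>Fl. (\<Phi>, \<Psi>) \<in> (steps Fl {0,1,2})\<^sup>*) \<and>
     (\<forall>\<Phi>\<in>Fl. \<forall>\<Psi>\<in>Fl. fv \<Phi> = fv \<Psi> \<longrightarrow> (\<Phi>, \<Psi>) \<in> (steps Fl {1,2})\<^sup>*) \<and>
     (\<forall>\<Phi>\<in>Fl. \<forall>\<Psi>\<in>Fl. fe \<Phi> = fe \<Psi> \<longrightarrow> (\<Phi>, \<Psi>) \<in> (steps Fl {0,2})\<^sup>*) \<and>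
     (\<forall>\<Phi>\<in>Fl. \<forall>\<Psi>\<in>Fl. ff \<Phi> = ff \<Psi> \<longrightarrow> (\<Phi>, \<Psi>) \<in> (steps Fl {0,1})\<^sup>*)"

definition is_map_aut :: "'v set \<Rightarrow> 'v set set \<Rightarrow> 'f set \<Rightarrow> ('v, 'f) flag set
    \<Rightarrow> ('v \<Rightarrow> 'v) \<Rightarrow> ('f \<Rightarrow> 'f) \<Rightarrow> bool" where
  "is_map_aut V E F Fl \<sigma> \<tau> \<longleftrightarrow>
     bij_betw \<sigma> V V \<and> bij_betw \<tau> F F \<and>
     (\<forall>e. e \<subseteq> V \<longrightarrow> (e \<in> E \<longleftrightarrow> \<sigma> ` e \<in> E)) \<and>
     (\<forall>v\<in>V. \<forall>e\<in>E. \<forall>f\<in>F. (v, e, f) \<in> Fl \<longleftrightarrow> (\<sigma> v, \<sigma> ` e, \<tau> f) \<in> Fl)"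

definition flag_act :: "('v \<Rightarrow> 'v) \<Rightarrow> ('f \<Rightarrow> 'f) \<Rightarrow> ('v, 'f) flag \<Rightarrow> ('v, 'f) flag" where
  "flag_act \<sigma> \<tau> \<Phi> = (\<sigma> (fv \<Phi>), \<sigma> ` fe \<Phi>, \<tau> (ff \<Phi>))"

definition aut_orbit_rel :: "'v set \<Rightarrow> 'v set set \<Rightarrow> 'f set \<Rightarrow> ('v, 'f) flag set
    \<Rightarrow> (('v, 'f) flag \<times> ('v, 'f) flag) set" where
  "aut_orbit_rel V E F Fl =
     {(\<Phi>, \<Psi>). \<Phi> \<in> Fl \<and> \<Psi> \<in> Fl \<and>
        (\<exists>\<sigma> \<tau>. is_map_aut V E F Fl \<sigma> \<tau> \<and> flag_act \<sigma> \<tau> \<Phi> = \<Psi>)}"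

definition class_2_01 :: "'v set \<Rightarrow> 'v set set \<Rightarrow> 'f set \<Rightarrow> ('v, 'f) flag set \<Rightarrow> bool" where
  "class_2_01 V E F Fl \<longleftrightarrow>
     card (Fl // aut_orbit_rel V E F Fl) = 2 \<and>
     (\<forall>\<Phi>\<in>Fl. (\<Phi>, nbr Fl 0 \<Phi>) \<in> aut_orbit_rel V E F Fl \<and>
              (\<Phi>, nbr Fl 1 \<Phi>) \<in> aut_orbit_rel V E F Fl \<and>
              (\<Phi>, nbr Fl 2 \<Phi>) \<notin> aut_orbit_rel V E F Fl)"

definition face_has_edge :: "('v, 'f) flag set \<Rightarrow> 'f \<Rightarrow> 'v set \<Rightarrow> bool" where
  "face_has_edge Fl f e \<longleftrightarrow> (\<exists>v. (v, e, f) \<in> Fl)"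

end

theory Submission
  imports Defs
begin

declare fv_def[simp] fe_def[simp] ff_def[simp]

lemma pmD_sub: "polytopal_map V E F Fl \<Longrightarrow> Fl \<subseteq> V \<times> E \<times> F"
  unfolding polytopal_map_def by (elim conjE) assumption

lemma pmD_edge: "polytopal_map V E F Fl \<Longrightarrow> \<forall>e\<in>E. e \<subseteq> V \<and> card e = 2"
  unfolding polytopal_map_def by (elim conjE) assumption

lemma pmD_inc: "polytopal_map V E F Fl \<Longrightarrow> \<forall>\<Phi>\<in>Fl. fv \<Phi> \<in> fe \<Phi>"
  unfolding polytopal_map_def by (elim conjE) assumption

lemma pmD_uniq: "polytopal_map V E F Fl \<Longrightarrow> \<forall>\<Phi>\<in>Fl. \<forall>i\<in>{0,1,2}. \<exists>!\<Psi>. \<Psi> \<in> Fl \<and> differs_exactly i \<Phi> \<Psi>"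
  unfolding polytopal_map_def by (elim conjE) assumption

lemma pmD_comm: "polytopal_map V E F Fl \<Longrightarrow> \<forall>\<Phi>\<in>Fl. nbr Fl 0 (nbr Fl 2 \<Phi>) = nbr Fl 2 (nbr Fl 0 \<Phi>)"
  unfolding polytopal_map_def by (elim conjE) assumption

lemma pmD_conn: "polytopal_map V E F Fl \<Longrightarrow> \<forall>\<Phi>\<in>Fl. \<forall>\<Psi>\<in>Fl. (\<Phi>, \<Psi>) \<in> (steps Fl {0,1,2})\<^sup>*"
  unfolding polytopal_map_def by (elim conjE) assumption


lemma pm_unique:
  assumes "polytopal_map V E F Fl" "P \<in> Fl" "i \<in> {0,1,2}"
  shows "\<exists>!Q. Q \<in> Fl \<and> differs_exactly i P Q"
  using pmD_uniq[OF assms(1)] assms(2,3) by blast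

lemma nbr_props:
  assumes "polytopal_map V E F Fl" "P \<in> Fl" "i \<in> {0,1,2}"
  shows "nbr Fl i P \<in> Fl \<and> differs_exactly i P (nbr Fl i P)"
  unfolding nbr_def using theI'[OF pm_unique[OF assms]] .

lemma nbr_eq:
  assumes "polytopal_map V E F Fl" "P \<in> Fl" "i \<in> {0,1,2}" "Q \<in> Fl" "differs_exactly i P Q"
  shows "nbr Fl i P = Q"
  unfolding nbr_def using the1_equality[OF pm_unique[OF assms(1-3)]] assms(4,5) by blast

lemma differs_sym: "differs_exactly i P Q \<Longrightarrow> differs_exactly i Q P"
  unfolding differs_exactly_def by (auto split: if_splits)

lemma nbr_inv:
  assumes "polytopal_map V E F Fl" "P \<in> Fl" "i \<in> {0,1,2}"
  shows "nbr Fl i (nbr Fl i P) = P"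
  using nbr_props[OF assms] nbr_eq[OF assms(1) _ assms(3) assms(2)] differs_sym by blast

lemma flag_in_edge:
  assumes pm: "polytopal_map V E F Fl" and "(u, e, h) \<in> Fl" "w \<in> e"
  shows "(w, e, h) \<in> Fl"
proof (cases "w = u")
  case True then show ?thesis using assms by simp
next
  case False
  have E: "e \<in> E" "card e = 2" "u \<in> e" using pmD_sub[OF pm] pmD_edge[OF pm] pmD_inc[OF pm] assms(2) by force+
  obtain Q where Q: "Q \<in> Fl" "differs_exactly 0 (u,e,h) Q" using nbr_props[OF pm assms(2), of 0] by blast
  obtain a b c where Qe: "Q = (a,b,c)" by (cases Q) auto
  have "a \<in> b" using pmD_inc[OF pm] Q(1) Qe by force
  with Q Qe have "b = e" "c = h" "a \<noteq> u" "a \<in> e" unfolding differs_exactly_def by auto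
  have "a = w"
  proof (rule ccontr)
    assume "a \<noteq> w"
    have "{u, w, a} \<subseteq> e" using E \<open>a \<in> e\<close> assms(3) by auto
    moreover have "card {u,w,a} = 3" using False \<open>a \<noteq> w\<close> \<open>a \<noteq> u\<close> by auto
    moreover have "finite e" using E(2) card.infinite by fastforce
    ultimately have "3 \<le> card e" by (metis card_mono)
    with E(2) show False by simp
  qed
  then show ?thesis using Q Qe \<open>b = e\<close> \<open>c = h\<close> by simp
qed

lemma pm_sub: "polytopal_map V E F Fl \<Longrightarrow> (a,b,c) \<in> Fl \<Longrightarrow> a \<in> V \<and> b \<in> E \<and> c \<in> F \<and> b \<subseteq> V"
  using pmD_sub[of V E F Fl] pmD_edge[of V E F Fl] by blast

lemma aut_in:
  assumes pm: "polytopal_map V E F Fl" and au: "is_map_aut V E F Fl \<sigma> \<tau>" and "P \<in> Fl"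
  shows "flag_act \<sigma> \<tau> P \<in> Fl"
proof -
  obtain a b c where P: "P = (a,b,c)" by (cases P) auto
  have abc: "a \<in> V" "b \<in> E" "c \<in> F" using pm_sub[OF pm] assms(3) P by auto
  have all: "\<forall>v\<in>V. \<forall>e\<in>E. \<forall>f\<in>F. (v, e, f) \<in> Fl \<longleftrightarrow> (\<sigma> v, \<sigma> ` e, \<tau> f) \<in> Fl"
    using au unfolding is_map_aut_def by (elim conjE) assumption
  have "(\<sigma> a, \<sigma> ` b, \<tau> c) \<in> Fl" using all[rule_format, OF abc] assms(3) P by simp
  then show ?thesis using P unfolding flag_act_def by simp
qed

lemma aut_nbr:
  assumes pm: "polytopal_map V E F Fl" and au: "is_map_aut V E F Fl \<sigma> \<tau>" and "P \<in> Fl"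
    and i: "i \<in> {0,1,2}"
  shows "nbr Fl i (flag_act \<sigma> \<tau> P) = flag_act \<sigma> \<tau> (nbr Fl i P)"
proof (rule nbr_eq[OF pm aut_in[OF pm au assms(3)] i aut_in[OF pm au]])
  show "nbr Fl i P \<in> Fl" using nbr_props[OF pm assms(3) i] by auto
  obtain a b c where P: "P = (a,b,c)" by (cases P) auto
  obtain a' b' c' where Q: "nbr Fl i P = (a',b',c')" by (cases "nbr Fl i P") auto
  have d: "differs_exactly i (a,b,c) (a',b',c')" using nbr_props[OF pm assms(3) i] P Q by auto
  have m: "a \<in> V \<and> b \<in> E \<and> c \<in> F \<and> b \<subseteq> V" "a' \<in> V \<and> b' \<in> E \<and> c' \<in> F \<and> b' \<subseteq> V"
    using pm_sub[OF pm] assms(3) P Q \<open>nbr Fl i P \<in> Fl\<close> by auto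
  have inj: "inj_on \<sigma> V" "inj_on \<tau> F" using au unfolding is_map_aut_def bij_betw_def by blast+
  have iv: "\<sigma> a = \<sigma> a' \<longleftrightarrow> a = a'" using inj_on_eq_iff[OF inj(1)] m by blast
  have ie: "\<sigma> ` b = \<sigma> ` b' \<longleftrightarrow> b = b'" using inj_on_image_eq_iff[OF inj(1)] m by blast
  have if': "\<tau> c = \<tau> c' \<longleftrightarrow> c = c'" using inj_on_eq_iff[OF inj(2)] m by blast
  show "differs_exactly i (flag_act \<sigma> \<tau> P) (flag_act \<sigma> \<tau> (nbr Fl i P))"
  proof -
    have "i = 0 \<or> i = 1 \<or> i = 2" using i by auto
    then have "differs_exactly i (flag_act \<sigma> \<tau> (a,b,c)) (flag_act \<sigma> \<tau> (a',b',c'))"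
      using d iv ie if' unfolding differs_exactly_def flag_act_def by (elim disjE) simp_all
    then show ?thesis by (simp only: P[symmetric] Q[symmetric])
  qed
qed

lemma id_aut: "polytopal_map V E F Fl \<Longrightarrow> is_map_aut V E F Fl id id"
  unfolding is_map_aut_def by simp

lemma flag_act_id: "flag_act id id P = P"
  unfolding flag_act_def by (cases P) simp

theorem corollary2p6:
  fixes V :: "'v set" and E :: "'v set set" and F :: "'f set" and Fl :: "('v, 'f) flag set"
  assumes "polytopal_map V E F Fl"
    and "class_2_01 V E F Fl"
  shows "\<not> (\<exists>f\<in>F. \<exists>g\<in>F. \<exists>e1\<in>E. \<exists>e2\<in>E. f \<noteq> g \<and> e1 \<noteq> e2 \<and> e1 \<inter> e2 \<noteq> {} \<and>
            face_has_edge Fl f e1 \<and> face_has_edge Fl f e2 \<and>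
            face_has_edge Fl g e1 \<and> face_has_edge Fl g e2)"
proof
  assume "\<exists>f\<in>F. \<exists>g\<in>F. \<exists>e1\<in>E. \<exists>e2\<in>E. f \<noteq> g \<and> e1 \<noteq> e2 \<and> e1 \<inter> e2 \<noteq> {} \<and>
            face_has_edge Fl f e1 \<and> face_has_edge Fl f e2 \<and>
            face_has_edge Fl g e1 \<and> face_has_edge Fl g e2"
  then obtain f g e1 e2 where fg: "f \<in> F" "g \<in> F" "f \<noteq> g" "e1 \<noteq> e2" "e1 \<inter> e2 \<noteq> {}"
    "face_has_edge Fl f e1" "face_has_edge Fl f e2" "face_has_edge Fl g e1" "face_has_edge Fl g e2"
    by blast
  note pm = assms(1)
  obtain v where v: "v \<in> e1" "v \<in> e2" using fg(5) by blast
  have fl: "(v,e1,f) \<in> Fl" "(v,e2,f) \<in> Fl" "(v,e1,g) \<in> Fl" "(v,e2,g) \<in> Fl"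
    using fg(6-9) v flag_in_edge[OF pm] unfolding face_has_edge_def by blast+
  define \<Phi> where "\<Phi> = (v,e1,f)"
  have P: "\<Phi> \<in> Fl" using fl \<Phi>_def by simp
  have i012: "0 \<in> {0,1,2::nat}" "1 \<in> {0,1,2::nat}" "2 \<in> {0,1,2::nat}" by auto
  have r1P: "nbr Fl 1 \<Phi> = (v,e2,f)"
    using nbr_eq[OF pm P i012(2) fl(2)] fg(4) unfolding \<Phi>_def differs_exactly_def by simp
  have r2P: "nbr Fl 2 \<Phi> = (v,e1,g)"
    using nbr_eq[OF pm P i012(3) fl(3)] fg(3) unfolding \<Phi>_def differs_exactly_def by simp
  have r1g: "nbr Fl 1 (v,e1,g) = (v,e2,g)"
    using nbr_eq[OF pm fl(3) i012(2) fl(4)] fg(4) unfolding differs_exactly_def by simp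
  have r2f: "nbr Fl 2 (v,e2,f) = (v,e2,g)"
    using nbr_eq[OF pm fl(2) i012(3) fl(4)] fg(3) unfolding differs_exactly_def by simp
  have r2g: "nbr Fl 2 (v,e2,g) = (v,e2,f)"
    using nbr_eq[OF pm fl(4) i012(3) fl(2)] fg(3) unfolding differs_exactly_def by simp
  define comm where "comm \<Psi> \<longleftrightarrow> nbr Fl 1 (nbr Fl 2 \<Psi>) = nbr Fl 2 (nbr Fl 1 \<Psi>)" for \<Psi>
  have c1: "comm \<Phi>" unfolding comm_def r1P r2P r1g r2f ..
  have c2: "comm (nbr Fl 2 \<Phi>)" unfolding comm_def nbr_inv[OF pm P i012(3)] r1P unfolding r2P r1g r2g ..
  define R where "R = aut_orbit_rel V E F Fl"
  have cl: "card (Fl // R) = 2" "\<And>\<Psi>. \<Psi> \<in> Fl \<Longrightarrow> (\<Psi>, nbr Fl 2 \<Psi>) \<notin> R"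
    using assms(2) unfolding class_2_01_def R_def by blast+
  have refl: "(\<Psi>, \<Psi>) \<in> R" if "\<Psi> \<in> Fl" for \<Psi>
    unfolding R_def aut_orbit_rel_def using that id_aut[OF pm] flag_act_id by blast
  have P2: "nbr Fl 2 \<Phi> \<in> Fl" using nbr_props[OF pm P i012(3)] by blast
  have orb: "(\<Phi>, \<Psi>) \<in> R \<or> (nbr Fl 2 \<Phi>, \<Psi>) \<in> R" if "\<Psi> \<in> Fl" for \<Psi>
  proof -
    define A where "A = R `` {\<Phi>}"
    define B where "B = R `` {nbr Fl 2 \<Phi>}"
    have AB: "A \<in> Fl // R" "B \<in> Fl // R" unfolding A_def B_def using P P2 by (auto intro: quotientI)
    have "\<Phi> \<in> A" unfolding A_def using refl[OF P] by blast
    moreover have "\<Phi> \<notin> B" unfolding B_def using cl(2)[OF P2] nbr_inv[OF pm P i012(3)] by auto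
    ultimately have AneB: "A \<noteq> B" by blast
    have fin: "finite (Fl // R)" using cl(1) card.infinite by fastforce
    have C: "R `` {\<Psi>} \<in> Fl // R" using that by (auto intro: quotientI)
    have "R `` {\<Psi>} = A \<or> R `` {\<Psi>} = B"
    proof (rule ccontr)
      assume "\<not> ?thesis"
      then have "R `` {\<Psi>} \<noteq> A" "R `` {\<Psi>} \<noteq> B" by auto
      then have "card {A, B, R `` {\<Psi>}} = 3" using AneB by simp
      moreover have "{A, B, R `` {\<Psi>}} \<subseteq> Fl // R" using AB C by blast
      ultimately have "3 \<le> card (Fl // R)" using card_mono[OF fin] by metis
      then show False using cl(1) by simp
    qed
    moreover have "\<Psi> \<in> R `` {\<Psi>}" using refl[OF that] by blast
    ultimately show ?thesis unfolding A_def B_def by blast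
  qed
  have comm_aut: "comm \<Psi>" if H: "(\<Psi>0, \<Psi>) \<in> R" "comm \<Psi>0" for \<Psi> \<Psi>0
  proof -
    obtain \<sigma> \<tau> where st: "\<Psi>0 \<in> Fl" "is_map_aut V E F Fl \<sigma> \<tau>" "flag_act \<sigma> \<tau> \<Psi>0 = \<Psi>"
    proof -
      have "(\<Psi>0, \<Psi>) \<in> aut_orbit_rel V E F Fl" using H(1) R_def by simp
      then show ?thesis using that unfolding aut_orbit_rel_def by blast
    qed
    have m1: "nbr Fl 1 \<Psi>0 \<in> Fl" "nbr Fl 2 \<Psi>0 \<in> Fl"
      using nbr_props[OF pm st(1)] i012 by blast+
    show ?thesis using H(2) unfolding comm_def st(3)[symmetric]
      aut_nbr[OF pm st(2) st(1) i012(2)] aut_nbr[OF pm st(2) st(1) i012(3)]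
      aut_nbr[OF pm st(2) m1(1) i012(3)] aut_nbr[OF pm st(2) m1(2) i012(2)] by simp
  qed
  have commall: "comm \<Psi>" if "\<Psi> \<in> Fl" for \<Psi>
    using orb[OF that] comm_aut c1 c2 by blast
  define \<tau> where "\<tau> h = (if h = f then g else if h = g then f else h)" for h
  have tt: "\<tau> (\<tau> h) = h" for h unfolding \<tau>_def using fg(3) by auto
  define S where "S = {\<Psi> \<in> Fl. ff \<Psi> \<in> {f,g} \<and> nbr Fl 2 \<Psi> = (fv \<Psi>, fe \<Psi>, \<tau> (ff \<Psi>))}"
  have PS: "\<Phi> \<in> S" unfolding S_def using P r2P unfolding \<Phi>_def \<tau>_def by simp
  have stepS: "\<Psi>' \<in> S" if H: "\<Psi> \<in> S" "(\<Psi>, \<Psi>') \<in> steps Fl {0,1,2}" for \<Psi> \<Psi>'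
  proof -
    obtain i where i: "i \<in> {0,1,2}" "\<Psi>' = nbr Fl i \<Psi>" using H(2) unfolding steps_def by blast
    have Fl: "\<Psi> \<in> Fl" using H(1) unfolding S_def by blast
    have S1: "ff \<Psi> \<in> {f,g}" "nbr Fl 2 \<Psi> = (fv \<Psi>, fe \<Psi>, \<tau> (ff \<Psi>))" using H(1) unfolding S_def by blast+
    have N: "\<Psi>' \<in> Fl" "differs_exactly i \<Psi> \<Psi>'" using nbr_props[OF pm Fl i(1)] i(2) by blast+
    have N2: "nbr Fl 2 \<Psi>' \<in> Fl" "differs_exactly 2 \<Psi>' (nbr Fl 2 \<Psi>')" using nbr_props[OF pm N(1) i012(3)] by blast+
    show ?thesis
    proof (cases "i = 2")
      case True
      have "nbr Fl 2 \<Psi>' = \<Psi>" using nbr_inv[OF pm Fl i012(3)] i(2) True by simp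
      moreover have "\<Psi>' = (fv \<Psi>, fe \<Psi>, \<tau> (ff \<Psi>))" using S1 i(2) True by simp
      moreover have "\<tau> (ff \<Psi>) \<in> {f,g}" using S1(1) unfolding \<tau>_def by auto
      ultimately show ?thesis unfolding S_def using N(1) tt by (cases \<Psi>) auto
    next
      case False
      then have i01: "i = 0 \<or> i = 1" using i(1) by auto
      have cm: "nbr Fl 2 \<Psi>' = nbr Fl i (nbr Fl 2 \<Psi>)"
      proof (cases "i = 0")
        case True
        have "\<forall>\<Phi>\<in>Fl. nbr Fl 0 (nbr Fl 2 \<Phi>) = nbr Fl 2 (nbr Fl 0 \<Phi>)"
          using pmD_comm[OF pm] .
        then show ?thesis using Fl i(2) True by simp
      next
        case False
        then show ?thesis using commall[OF Fl] i01 i(2) unfolding comm_def by simp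
      qed
      have M: "nbr Fl 2 \<Psi> \<in> Fl" using nbr_props[OF pm Fl i012(3)] by blast
      have D: "differs_exactly i (nbr Fl 2 \<Psi>) (nbr Fl i (nbr Fl 2 \<Psi>))" using nbr_props[OF pm M i(1)] by blast
      have ffe: "ff \<Psi>' = ff \<Psi>" using N(2) i01 unfolding differs_exactly_def by auto
      have "ff (nbr Fl 2 \<Psi>') = \<tau> (ff \<Psi>')"
        using D i01 S1(2) ffe unfolding cm differs_exactly_def by auto
      moreover have "fv (nbr Fl 2 \<Psi>') = fv \<Psi>'" "fe (nbr Fl 2 \<Psi>') = fe \<Psi>'"
        using N2(2) unfolding differs_exactly_def by auto
      ultimately have "nbr Fl 2 \<Psi>' = (fv \<Psi>', fe \<Psi>', \<tau> (ff \<Psi>'))"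
        by (cases "nbr Fl 2 \<Psi>'") simp
      then show ?thesis unfolding S_def using N(1) ffe S1(1) by simp
    qed
  qed
  have allS: "\<Psi> \<in> S" if "\<Psi> \<in> Fl" for \<Psi>
  proof -
    have "\<forall>\<Phi>\<in>Fl. \<forall>\<Psi>\<in>Fl. (\<Phi>, \<Psi>) \<in> (steps Fl {0,1,2})\<^sup>*" using pmD_conn[OF pm] .
    then have "(\<Phi>, \<Psi>) \<in> (steps Fl {0,1,2})\<^sup>*" using P that by blast
    then show ?thesis
    proof (induction rule: rtrancl_induct)
      case base then show ?case using PS .
    next
      case (step y z) then show ?case using stepS by blast
    qed
  qed
  have inc: "(w, e, \<tau> h) \<in> Fl" if "(w, e, h) \<in> Fl" for w e h
  proof -
    have "(w,e,h) \<in> S" using allS that by blast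
    then have "nbr Fl 2 (w,e,h) = (w,e,\<tau> h)" unfolding S_def by simp
    then show ?thesis using nbr_props[OF pm that i012(3)] by simp
  qed
  have aut: "is_map_aut V E F Fl id \<tau>"
    unfolding is_map_aut_def
  proof (intro conjI allI impI ballI)
    show "bij_betw id V V" by simp
    have "\<tau> ` F \<subseteq> F" unfolding \<tau>_def using fg(1,2) by auto
    then show "bij_betw \<tau> F F" by (intro bij_betw_byWitness[where f'=\<tau>]) (auto simp: tt)
  next
    fix e :: "'v set" assume "e \<subseteq> V" then show "e \<in> E \<longleftrightarrow> id ` e \<in> E" by simp
  next
    fix w e h assume "w \<in> V" "e \<in> E" "h \<in> F"
    show "(w, e, h) \<in> Fl \<longleftrightarrow> (id w, id ` e, \<tau> h) \<in> Fl"
      using inc[of w e h] inc[of w e "\<tau> h"] tt[of h] by auto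
  qed
  have "flag_act id \<tau> \<Phi> = nbr Fl 2 \<Phi>" unfolding r2P unfolding flag_act_def \<Phi>_def \<tau>_def by simp
  then have "(\<Phi>, nbr Fl 2 \<Phi>) \<in> R" unfolding R_def aut_orbit_rel_def using P P2 aut by blast
  then show False using cl(2)[OF P] by blast
qed

end
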